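(* $\mathsf{GKur}=\mathsf{MS4}+\Box\forall\Diamond\Box p\to\Diamond\Box\forall p=\mathsf{MS4}+\Box\neg\Box\forall\neg p\to\neg\Box\forall\neg\Box\Diamond p$.
   Context: $\mathsf{MIPC}$ is the smallest set of formulas in the bimodal language $\mathcal{L}_{\forall\exists}$ containing all theorems of $\mathsf{IPC}$; $\forall(p\wedge q)\leftrightarrow(\forall p\wedge\forall q)$, $\forall p\to p$, $\forall p\to\forall\forall p$; $\exists(p\vee q)\leftrightarrow(\exists p\vee\exists q)$, $p\to\exists p$, $\exists\exists p\to\exists p$, $(\exists p\wedge\exists q)\to\exists(\exists p\wedge q)$; $\exists\forall p\to\forall p$, $\exists p\to\forall\exists p$; closed under modus ponens, substitution and $\varphi/\forall\varphi$. $\mathsf{Kur}=\mathsf{MIPC}+\forall\neg\neg p\to\neg\neg\forall p$. $\mathsf{MS4}$ is the smallest set of formulas in the classical bimodal language $\mathcal{L}_{\Box\forall}$ containing all classical tautologies, the $\mathsf{S4}$ axioms for $\Box$, the $\mathsf{S5}$ axioms for $\forall$, and $\Box\forall p\to\forall\Box p$, closed under modus ponens, substitution, $\Box$- and $\forall$-necessitation; $\Diamond=\neg\Box\neg$, $\exists=\neg\forall\neg$. $\mathsf{GKur}=\mathsf{MS4}+\{\varphi^t:\mathsf{Kur}\vdash\varphi\}$, with Gödel translation $\bot^t=\bot$, $p^t=\Box p$, $(\varphi\wedge\psi)^t=\varphi^t\wedge\psi^t$, $(\varphi\vee\psi)^t=\varphi^t\vee\psi^t$, $(\varphi\to\psi)^t=\Box(\neg\varphi^t\vee\psi^t)$,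 $(\forall\varphi)^t=\Box\forall\varphi^t$, $(\exists\varphi)^t=\exists\varphi^t$. *)

theory Defs
  imports Main
begin

datatype iform = IBot | IVar nat | IAnd iform iform | IOr iform iform
  | IImp iform iform | IAll iform | IEx iform

definition INeg :: "iform \<Rightarrow> iform" where "INeg a = IImp a IBot"
definition IIff :: "iform \<Rightarrow> iform \<Rightarrow> iform" where
  "IIff a b = IAnd (IImp a b) (IImp b a)"

fun isubst :: "(nat \<Rightarrow> iform) \<Rightarrow> iform \<Rightarrow> iform" where
  "isubst s IBot = IBot"
| "isubst s (IVar n) = s n"
| "isubst s (IAnd a b) = IAnd (isubst s a) (isubst s b)"
| "isubst s (IOr a b) = IOr (isubst s a) (isubst s b)"
| "isubst s (IImp a b) = IImp (isubst s a) (isubst s b)"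
| "isubst s (IAll a) = IAll (isubst s a)"
| "isubst s (IEx a) = IEx (isubst s a)"

fun iprop :: "iform \<Rightarrow> bool" where
  "iprop IBot = True"
| "iprop (IVar n) = True"
| "iprop (IAnd a b) = (iprop a \<and> iprop b)"
| "iprop (IOr a b) = (iprop a \<and> iprop b)"
| "iprop (IImp a b) = (iprop a \<and> iprop b)"
| "iprop (IAll a) = False"
| "iprop (IEx a) = False"

inductive_set IPC :: "iform set" where
  ipc1: "iprop a \<Longrightarrow> iprop b \<Longrightarrow> IImp a (IImp b a) \<in> IPC"
| ipc2: "iprop a \<Longrightarrow> iprop b \<Longrightarrow> iprop c \<Longrightarrow>
     IImp (IImp a (IImp b c)) (IImp (IImp a b) (IImp a c)) \<in> IPC"
| ipc3: "iprop a \<Longrightarrow> iprop b \<Longrightarrow> IImp (IAnd a b) a \<in> IPC"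
| ipc4: "iprop a \<Longrightarrow> iprop b \<Longrightarrow> IImp (IAnd a b) b \<in> IPC"
| ipc5: "iprop a \<Longrightarrow> iprop b \<Longrightarrow> IImp a (IImp b (IAnd a b)) \<in> IPC"
| ipc6: "iprop a \<Longrightarrow> iprop b \<Longrightarrow> IImp a (IOr a b) \<in> IPC"
| ipc7: "iprop a \<Longrightarrow> iprop b \<Longrightarrow> IImp b (IOr a b) \<in> IPC"
| ipc8: "iprop a \<Longrightarrow> iprop b \<Longrightarrow> iprop c \<Longrightarrow>
     IImp (IImp a c) (IImp (IImp b c) (IImp (IOr a b) c)) \<in> IPC"
| ipc9: "iprop a \<Longrightarrow> IImp IBot a \<in> IPC"
| ipc_mp: "a \<in> IPC \<Longrightarrow> IImp a b \<in> IPC \<Longrightarrow> b \<in> IPC"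

abbreviation "ip \<equiv> IVar 0"
abbreviation "iq \<equiv> IVar 1"

inductive_set MIPC_ext :: "iform set \<Rightarrow> iform set" for Ax :: "iform set" where
  m_ipc: "a \<in> IPC \<Longrightarrow> a \<in> MIPC_ext Ax"
| m_extra: "a \<in> Ax \<Longrightarrow> a \<in> MIPC_ext Ax"
| m_a1: "IIff (IAll (IAnd ip iq)) (IAnd (IAll ip) (IAll iq)) \<in> MIPC_ext Ax"
| m_a2: "IImp (IAll ip) ip \<in> MIPC_ext Ax"
| m_a3: "IImp (IAll ip) (IAll (IAll ip)) \<in> MIPC_ext Ax"
| m_e1: "IIff (IEx (IOr ip iq)) (IOr (IEx ip) (IEx iq)) \<in> MIPC_ext Ax"
| m_e2: "IImp ip (IEx ip) \<in> MIPC_ext Ax"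
| m_e3: "IImp (IEx (IEx ip)) (IEx ip) \<in> MIPC_ext Ax"
| m_e4: "IImp (IAnd (IEx ip) (IEx iq)) (IEx (IAnd (IEx ip) iq)) \<in> MIPC_ext Ax"
| m_c1: "IImp (IEx (IAll ip)) (IAll ip) \<in> MIPC_ext Ax"
| m_c2: "IImp (IEx ip) (IAll (IEx ip)) \<in> MIPC_ext Ax"
| m_mp: "a \<in> MIPC_ext Ax \<Longrightarrow> IImp a b \<in> MIPC_ext Ax \<Longrightarrow> b \<in> MIPC_ext Ax"
| m_subst: "a \<in> MIPC_ext Ax \<Longrightarrow> isubst s a \<in> MIPC_ext Ax"
| m_nec: "a \<in> MIPC_ext Ax \<Longrightarrow> IAll a \<in> MIPC_ext Ax"

definition MIPC :: "iform set" where "MIPC = MIPC_ext {}"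

definition Kur :: "iform set" where
  "Kur = MIPC_ext {IImp (IAll (INeg (INeg ip))) (INeg (INeg (IAll ip)))}"

datatype cform = CBot | CVar nat | CNeg cform | CAnd cform cform | COr cform cform
  | CImp cform cform | CBox cform | CAll cform

definition CDia :: "cform \<Rightarrow> cform" where "CDia a = CNeg (CBox (CNeg a))"
definition CEx :: "cform \<Rightarrow> cform" where "CEx a = CNeg (CAll (CNeg a))"

fun csubst :: "(nat \<Rightarrow> cform) \<Rightarrow> cform \<Rightarrow> cform" where
  "csubst s CBot = CBot"
| "csubst s (CVar n) = s n"
| "csubst s (CNeg a) = CNeg (csubst s a)"
| "csubst s (CAnd a b) = CAnd (csubst s a) (csubst s b)"
| "csubst s (COr a b) = COr (csubst s a) (csubst s b)"
| "csubst s (CImp a b) = CImp (csubst s a) (csubst s b)"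
| "csubst s (CBox a) = CBox (csubst s a)"
| "csubst s (CAll a) = CAll (csubst s a)"

text \<open>Boolean evaluation treating variables and modalized formulas as atoms;
  classical tautologies of the bimodal language are the formulas true under
  every such valuation (i.e. substitution instances of propositional tautologies).\<close>
fun ceval :: "(cform \<Rightarrow> bool) \<Rightarrow> cform \<Rightarrow> bool" where
  "ceval v CBot = False"
| "ceval v (CVar n) = v (CVar n)"
| "ceval v (CNeg a) = (\<not> ceval v a)"
| "ceval v (CAnd a b) = (ceval v a \<and> ceval v b)"
| "ceval v (COr a b) = (ceval v a \<or> ceval v b)"
| "ceval v (CImp a b) = (ceval v a \<longrightarrow> ceval v b)"
| "ceval v (CBox a) = v (CBox a)"
| "ceval v (CAll a) = v (CAll a)"

definition tautology :: "cform \<Rightarrow> bool" where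
  "tautology a = (\<forall>v. ceval v a)"

abbreviation "cp \<equiv> CVar 0"
abbreviation "cq \<equiv> CVar 1"

inductive_set MS4_ext :: "cform set \<Rightarrow> cform set" for Ax :: "cform set" where
  s_taut: "tautology a \<Longrightarrow> a \<in> MS4_ext Ax"
| s_extra: "a \<in> Ax \<Longrightarrow> a \<in> MS4_ext Ax"
| s_boxK: "CImp (CBox (CImp cp cq)) (CImp (CBox cp) (CBox cq)) \<in> MS4_ext Ax"
| s_boxT: "CImp (CBox cp) cp \<in> MS4_ext Ax"
| s_box4: "CImp (CBox cp) (CBox (CBox cp)) \<in> MS4_ext Ax"
| s_allK: "CImp (CAll (CImp cp cq)) (CImp (CAll cp) (CAll cq)) \<in> MS4_ext Ax"
| s_allT: "CImp (CAll cp) cp \<in> MS4_ext Ax"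
| s_all5: "CImp (CNeg (CAll cp)) (CAll (CNeg (CAll cp))) \<in> MS4_ext Ax"
| s_lc: "CImp (CBox (CAll cp)) (CAll (CBox cp)) \<in> MS4_ext Ax"
| s_mp: "a \<in> MS4_ext Ax \<Longrightarrow> CImp a b \<in> MS4_ext Ax \<Longrightarrow> b \<in> MS4_ext Ax"
| s_subst: "a \<in> MS4_ext Ax \<Longrightarrow> csubst s a \<in> MS4_ext Ax"
| s_boxnec: "a \<in> MS4_ext Ax \<Longrightarrow> CBox a \<in> MS4_ext Ax"
| s_allnec: "a \<in> MS4_ext Ax \<Longrightarrow> CAll a \<in> MS4_ext Ax"

definition MS4 :: "cform set" where "MS4 = MS4_ext {}"

fun goedel :: "iform \<Rightarrow> cform" where
  "goedel IBot = CBot"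
| "goedel (IVar n) = CBox (CVar n)"
| "goedel (IAnd a b) = CAnd (goedel a) (goedel b)"
| "goedel (IOr a b) = COr (goedel a) (goedel b)"
| "goedel (IImp a b) = CBox (COr (CNeg (goedel a)) (goedel b))"
| "goedel (IAll a) = CBox (CAll (goedel a))"
| "goedel (IEx a) = CEx (goedel a)"

definition GKur :: "cform set" where
  "GKur = MS4_ext (goedel ` Kur)"

end

theory Submission
  imports Defs
begin

declare CEx_def[simp] CDia_def[simp] INeg_def[simp] IIff_def[simp]

abbreviation CI where "CI X Y \<equiv> CBox (COr (CNeg X) Y)"

lemma t0: "tautology a \<Longrightarrow> a \<in> MS4_ext Ax" by (rule s_taut)
lemma t1: "tautology (CImp a b) \<Longrightarrow> a \<in> MS4_ext Ax \<Longrightarrow> b \<in> MS4_ext Ax"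
  by (meson s_mp s_taut)
lemma t2: "tautology (CImp a (CImp b c)) \<Longrightarrow> a \<in> MS4_ext Ax \<Longrightarrow> b \<in> MS4_ext Ax \<Longrightarrow> c \<in> MS4_ext Ax"
  by (meson s_mp s_taut)
lemma t3: "tautology (CImp a (CImp b (CImp c d))) \<Longrightarrow> a \<in> MS4_ext Ax \<Longrightarrow> b \<in> MS4_ext Ax
  \<Longrightarrow> c \<in> MS4_ext Ax \<Longrightarrow> d \<in> MS4_ext Ax"
  by (meson s_mp s_taut)
lemma t4: "tautology (CImp a (CImp b (CImp c (CImp d e)))) \<Longrightarrow> a \<in> MS4_ext Ax \<Longrightarrow> b \<in> MS4_ext Ax
  \<Longrightarrow> c \<in> MS4_ext Ax \<Longrightarrow> d \<in> MS4_ext Ax \<Longrightarrow> e \<in> MS4_ext Ax"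
  by (meson s_mp s_taut)

lemma imp_trans: assumes "CImp a b \<in> MS4_ext Ax" "CImp b c \<in> MS4_ext Ax"
  shows "CImp a c \<in> MS4_ext Ax"
  by (rule t2[OF _ assms]) (auto simp: tautology_def)

lemma boxK: "CImp (CBox (CImp a b)) (CImp (CBox a) (CBox b)) \<in> MS4_ext Ax"
  using s_subst[OF s_boxK, where s="\<lambda>n. if n = 0 then a else b"] by simp
lemma allK: "CImp (CAll (CImp a b)) (CImp (CAll a) (CAll b)) \<in> MS4_ext Ax"
  using s_subst[OF s_allK, where s="\<lambda>n. if n = 0 then a else b"] by simp
lemma boxT: "CImp (CBox a) a \<in> MS4_ext Ax"
  using s_subst[OF s_boxT, where s="\<lambda>n. a"] by simp
lemma box4: "CImp (CBox a) (CBox (CBox a)) \<in> MS4_ext Ax"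
  using s_subst[OF s_box4, where s="\<lambda>n. a"] by simp
lemma allT: "CImp (CAll a) a \<in> MS4_ext Ax"
  using s_subst[OF s_allT, where s="\<lambda>n. a"] by simp
lemma all5: "CImp (CNeg (CAll a)) (CAll (CNeg (CAll a))) \<in> MS4_ext Ax"
  using s_subst[OF s_all5, where s="\<lambda>n. a"] by simp
lemma lc: "CImp (CBox (CAll a)) (CAll (CBox a)) \<in> MS4_ext Ax"
  using s_subst[OF s_lc, where s="\<lambda>n. a"] by simp

lemma box_mono: assumes "CImp a b \<in> MS4_ext Ax" shows "CImp (CBox a) (CBox b) \<in> MS4_ext Ax"
  using s_mp[OF s_boxnec[OF assms] boxK] .
lemma all_mono: assumes "CImp a b \<in> MS4_ext Ax" shows "CImp (CAll a) (CAll b) \<in> MS4_ext Ax"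
  using s_mp[OF s_allnec[OF assms] allK] .
lemma contra: assumes "CImp a b \<in> MS4_ext Ax" shows "CImp (CNeg b) (CNeg a) \<in> MS4_ext Ax"
  by (rule t1[OF _ assms]) (auto simp: tautology_def)
lemma ex_mono: assumes "CImp a b \<in> MS4_ext Ax"
  shows "CImp (CNeg (CAll (CNeg a))) (CNeg (CAll (CNeg b))) \<in> MS4_ext Ax"
  by (rule contra, rule all_mono, rule contra, rule assms)
lemma taut_imp: "tautology (CImp a b) \<Longrightarrow> CImp a b \<in> MS4_ext Ax" by (rule s_taut)

lemma box_and: "CImp (CAnd (CBox a) (CBox b)) (CBox (CAnd a b)) \<in> MS4_ext Ax"
proof -
  have 1: "CImp (CBox a) (CBox (CImp b (CAnd a b))) \<in> MS4_ext Ax"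
    by (rule box_mono, rule t0) (auto simp: tautology_def)
  show ?thesis by (rule t2[OF _ 1 boxK[of b "CAnd a b"]]) (auto simp: tautology_def)
qed
lemma all_and: "CImp (CAnd (CAll a) (CAll b)) (CAll (CAnd a b)) \<in> MS4_ext Ax"
proof -
  have 1: "CImp (CAll a) (CAll (CImp b (CAnd a b))) \<in> MS4_ext Ax"
    by (rule all_mono, rule t0) (auto simp: tautology_def)
  show ?thesis by (rule t2[OF _ 1 allK[of b "CAnd a b"]]) (auto simp: tautology_def)
qed
lemma ex_intro: "CImp a (CNeg (CAll (CNeg a))) \<in> MS4_ext Ax"
  by (rule t1[OF _ allT[of "CNeg a"]]) (auto simp: tautology_def)
lemma exall: "CImp (CNeg (CAll (CNeg (CAll a)))) (CAll a) \<in> MS4_ext Ax"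
  by (rule t1[OF _ all5[of a]]) (auto simp: tautology_def)
lemma all4: "CImp (CAll a) (CAll (CAll a)) \<in> MS4_ext Ax"
  by (rule imp_trans[OF ex_intro[of "CAll a"] imp_trans[OF all5[of "CNeg (CAll a)"] all_mono[OF exall]]])
lemma ex_stable: assumes "CImp z (CAll z) \<in> MS4_ext Ax"
  shows "CImp (CNeg (CAll (CNeg z))) z \<in> MS4_ext Ax"
  by (rule imp_trans[OF ex_mono[OF assms] imp_trans[OF exall allT]])
lemma boxall_stable: "CImp (CBox (CAll a)) (CAll (CBox (CAll a))) \<in> MS4_ext Ax"
  by (rule imp_trans[OF box_mono[OF all4] lc])
lemma ex_box: "CImp (CNeg (CAll (CNeg (CBox y)))) (CBox (CNeg (CAll (CNeg y)))) \<in> MS4_ext Ax"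
proof -
  have h1: "CImp (CBox (CNeg (CAll (CNeg y)))) (CAll (CBox (CNeg (CAll (CNeg y))))) \<in> MS4_ext Ax"
    by (rule imp_trans[OF box_mono[OF all5[of "CNeg y"]] lc])
  show ?thesis by (rule imp_trans[OF ex_mono[OF box_mono[OF ex_intro]] ex_stable[OF h1]])
qed

lemma stab_and: assumes "CImp p (CBox p) \<in> MS4_ext Ax" "CImp q (CBox q) \<in> MS4_ext Ax"
  shows "CImp (CAnd p q) (CBox (CAnd p q)) \<in> MS4_ext Ax"
  by (rule t3[OF _ assms box_and[of p q]]) (auto simp: tautology_def)

lemma stab: "CImp (goedel a) (CBox (goedel a)) \<in> MS4_ext Ax"
proof (induction a)
  case IBot then show ?case by (simp add: taut_imp tautology_def)
next
  case (IVar x) then show ?case by (simp add: box4)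
next
  case (IAnd a1 a2) then show ?case by (simp add: stab_and)
next
  case (IOr a1 a2)
  have 1: "CImp (CBox (goedel a1)) (CBox (COr (goedel a1) (goedel a2))) \<in> MS4_ext Ax"
    by (rule box_mono, rule t0) (auto simp: tautology_def)
  have 2: "CImp (CBox (goedel a2)) (CBox (COr (goedel a1) (goedel a2))) \<in> MS4_ext Ax"
    by (rule box_mono, rule t0) (auto simp: tautology_def)
  show ?case using IOr by simp (rule t4[OF _ IOr.IH 1 2], auto simp: tautology_def)
next
  case (IImp a1 a2) then show ?case by (simp add: box4)
next
  case (IAll a) then show ?case by (simp add: box4)
next
  case (IEx a) then show ?case by simp (rule imp_trans[OF ex_mono[OF IEx.IH] ex_box])
qed


lemma imp_intro: assumes "CImp a b \<in> MS4_ext Ax" shows "CI a b \<in> MS4_ext Ax"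
  by (rule s_boxnec, rule t1[OF _ assms]) (auto simp: tautology_def)
lemma ci_imp: assumes "CI a b \<in> MS4_ext Ax" shows "CImp a b \<in> MS4_ext Ax"
  by (rule t1[OF _ s_mp[OF assms boxT]]) (auto simp: tautology_def)
lemma imp_elim: assumes "CI a b \<in> MS4_ext Ax" "a \<in> MS4_ext Ax" shows "b \<in> MS4_ext Ax"
  by (rule s_mp[OF assms(2) ci_imp[OF assms(1)]])
lemma boxded: assumes "CImp p (CBox p) \<in> MS4_ext Ax" "CImp (CAnd p x) y \<in> MS4_ext Ax"
  shows "CImp p (CI x y) \<in> MS4_ext Ax"
proof -
  have "CImp p (COr (CNeg x) y) \<in> MS4_ext Ax"
    by (rule t1[OF _ assms(2)]) (auto simp: tautology_def)
  then show ?thesis by (rule imp_trans[OF assms(1) box_mono])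
qed

lemma subst_eq: "CImp (goedel (isubst s a)) (csubst (\<lambda>n. goedel (s n)) (goedel a)) \<in> MS4_ext Ax
  \<and> CImp (csubst (\<lambda>n. goedel (s n)) (goedel a)) (goedel (isubst s a)) \<in> MS4_ext Ax"
proof (induction a)
  case IBot then show ?case by (simp add: taut_imp tautology_def)
next
  case (IVar x) then show ?case by (simp add: stab boxT)
next
  case (IAnd a1 a2)
  then have h: "CImp (goedel (isubst s a1)) (csubst (\<lambda>n. goedel (s n)) (goedel a1)) \<in> MS4_ext Ax"
    "CImp (csubst (\<lambda>n. goedel (s n)) (goedel a1)) (goedel (isubst s a1)) \<in> MS4_ext Ax"
    "CImp (goedel (isubst s a2)) (csubst (\<lambda>n. goedel (s n)) (goedel a2)) \<in> MS4_ext Ax"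
    "CImp (csubst (\<lambda>n. goedel (s n)) (goedel a2)) (goedel (isubst s a2)) \<in> MS4_ext Ax"
    by auto
  show ?case by simp (intro conjI; rule t2[OF _ h(1) h(3)] t2[OF _ h(2) h(4)]; auto simp: tautology_def)
next
  case (IOr a1 a2)
  then have h: "CImp (goedel (isubst s a1)) (csubst (\<lambda>n. goedel (s n)) (goedel a1)) \<in> MS4_ext Ax"
    "CImp (csubst (\<lambda>n. goedel (s n)) (goedel a1)) (goedel (isubst s a1)) \<in> MS4_ext Ax"
    "CImp (goedel (isubst s a2)) (csubst (\<lambda>n. goedel (s n)) (goedel a2)) \<in> MS4_ext Ax"
    "CImp (csubst (\<lambda>n. goedel (s n)) (goedel a2)) (goedel (isubst s a2)) \<in> MS4_ext Ax"
    by auto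
  show ?case by simp (intro conjI; rule t2[OF _ h(1) h(3)] t2[OF _ h(2) h(4)]; auto simp: tautology_def)
next
  case (IImp a1 a2)
  then have h: "CImp (goedel (isubst s a1)) (csubst (\<lambda>n. goedel (s n)) (goedel a1)) \<in> MS4_ext Ax"
    "CImp (csubst (\<lambda>n. goedel (s n)) (goedel a1)) (goedel (isubst s a1)) \<in> MS4_ext Ax"
    "CImp (goedel (isubst s a2)) (csubst (\<lambda>n. goedel (s n)) (goedel a2)) \<in> MS4_ext Ax"
    "CImp (csubst (\<lambda>n. goedel (s n)) (goedel a2)) (goedel (isubst s a2)) \<in> MS4_ext Ax"
    by auto
  show ?case by simp (intro conjI; rule box_mono; rule t2[OF _ h(2) h(3)] t2[OF _ h(1) h(4)]; auto simp: tautology_def)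
next
  case (IAll a)
  then show ?case by (simp add: box_mono all_mono)
next
  case (IEx a)
  then show ?case by (simp add: ex_mono)
qed

lemma ipc_sound: "a \<in> IPC \<Longrightarrow> goedel a \<in> MS4_ext Ax"
proof (induction rule: IPC.induct)
  case (ipc1 a b)
  show ?case by simp (rule imp_intro, rule boxded[OF stab], rule taut_imp, auto simp: tautology_def)
next
  case (ipc2 a b c)
  let ?A = "goedel a" and ?B = "goedel b" and ?C = "goedel c"
  have "CImp (CAnd (CAnd (CI ?A (CI ?B ?C)) (CI ?A ?B)) ?A) ?C \<in> MS4_ext Ax"
    by (rule t3[OF _ boxT[of "COr (CNeg ?A) (CI ?B ?C)"] boxT[of "COr (CNeg ?A) ?B"]
          boxT[of "COr (CNeg ?B) ?C"]]) (auto simp: tautology_def)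
  then show ?case by simp (rule imp_intro, rule boxded[OF box4], rule boxded[OF stab_and[OF box4 box4]])
next
  case (ipc3 a b) show ?case by simp (rule imp_intro, rule taut_imp, auto simp: tautology_def)
next
  case (ipc4 a b) show ?case by simp (rule imp_intro, rule taut_imp, auto simp: tautology_def)
next
  case (ipc5 a b)
  show ?case by simp (rule imp_intro, rule boxded[OF stab], rule taut_imp, auto simp: tautology_def)
next
  case (ipc6 a b) show ?case by simp (rule imp_intro, rule taut_imp, auto simp: tautology_def)
next
  case (ipc7 a b) show ?case by simp (rule imp_intro, rule taut_imp, auto simp: tautology_def)
next
  case (ipc8 a b c)
  let ?A = "goedel a" and ?B = "goedel b" and ?C = "goedel c"
  have "CImp (CAnd (CAnd (CI ?A ?C) (CI ?B ?C)) (COr ?A ?B)) ?C \<in> MS4_ext Ax"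
    by (rule t2[OF _ boxT[of "COr (CNeg ?A) ?C"] boxT[of "COr (CNeg ?B) ?C"]]) (auto simp: tautology_def)
  then show ?case by simp (rule imp_intro, rule boxded[OF box4], rule boxded[OF stab_and[OF box4 box4]])
next
  case (ipc9 a) show ?case by simp (rule imp_intro, rule taut_imp, auto simp: tautology_def)
next
  case (ipc_mp a b) then show ?case by (simp add: imp_elim)
qed


lemma allex: "CImp (CAnd (CAll x) (CNeg (CAll (CNeg y)))) (CNeg (CAll (CNeg (CAnd x y)))) \<in> MS4_ext Ax"
proof -
  have h1: "CImp (CAll x) (CAll (CImp (CNeg (CAnd x y)) (CNeg y))) \<in> MS4_ext Ax"
    by (rule all_mono, rule taut_imp, auto simp: tautology_def)
  show ?thesis by (rule t2[OF _ h1 allK[of "CNeg (CAnd x y)" "CNeg y"]]) (auto simp: tautology_def)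
qed

lemma mipc_sound: assumes "a \<in> MIPC_ext Ax'" "goedel ` Ax' \<subseteq> MS4_ext Ax"
  shows "goedel a \<in> MS4_ext Ax"
  using assms(1)
proof induction
  case (m_ipc a) then show ?case by (rule ipc_sound)
next
  case (m_extra a) then show ?case using assms(2) by auto
next
  case m_a1
  let ?P = "CBox cp" and ?Q = "CBox cq"
  have 1: "CImp (CBox (CAll (CAnd ?P ?Q))) (CBox (CAll ?P)) \<in> MS4_ext Ax"
    by (rule box_mono, rule all_mono, rule taut_imp, auto simp: tautology_def)
  have 2: "CImp (CBox (CAll (CAnd ?P ?Q))) (CBox (CAll ?Q)) \<in> MS4_ext Ax"
    by (rule box_mono, rule all_mono, rule taut_imp, auto simp: tautology_def)
  have 3: "CImp (CBox (CAll (CAnd ?P ?Q))) (CAnd (CBox (CAll ?P)) (CBox (CAll ?Q))) \<in> MS4_ext Ax"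
    by (rule t2[OF _ 1 2]) (auto simp: tautology_def)
  have 4: "CImp (CAnd (CBox (CAll ?P)) (CBox (CAll ?Q))) (CBox (CAll (CAnd ?P ?Q))) \<in> MS4_ext Ax"
    by (rule imp_trans[OF box_and box_mono[OF all_and]])
  show ?case by simp (rule t2[OF _ imp_intro[OF 3] imp_intro[OF 4]], auto simp: tautology_def)
next
  case m_a2 show ?case by simp (rule imp_intro, rule imp_trans[OF boxT allT])
next
  case m_a3 show ?case by simp (rule imp_intro, rule imp_trans[OF box4 box_mono[OF boxall_stable]])
next
  case m_e1
  let ?P = "CBox cp" and ?Q = "CBox cq"
  have 1: "CImp (CAnd (CAll (CNeg ?P)) (CAll (CNeg ?Q))) (CAll (CNeg (COr ?P ?Q))) \<in> MS4_ext Ax"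
    by (rule imp_trans[OF all_and all_mono], rule taut_imp, auto simp: tautology_def)
  have 2: "CImp (CNeg (CAll (CNeg (COr ?P ?Q)))) (COr (CNeg (CAll (CNeg ?P))) (CNeg (CAll (CNeg ?Q)))) \<in> MS4_ext Ax"
    by (rule t1[OF _ 1]) (auto simp: tautology_def)
  have 3: "CImp (CNeg (CAll (CNeg ?P))) (CNeg (CAll (CNeg (COr ?P ?Q)))) \<in> MS4_ext Ax"
    by (rule ex_mono, rule taut_imp, auto simp: tautology_def)
  have 4: "CImp (CNeg (CAll (CNeg ?Q))) (CNeg (CAll (CNeg (COr ?P ?Q)))) \<in> MS4_ext Ax"
    by (rule ex_mono, rule taut_imp, auto simp: tautology_def)
  have 5: "CImp (COr (CNeg (CAll (CNeg ?P))) (CNeg (CAll (CNeg ?Q)))) (CNeg (CAll (CNeg (COr ?P ?Q)))) \<in> MS4_ext Ax"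
    by (rule t2[OF _ 3 4]) (auto simp: tautology_def)
  show ?case by simp (rule t2[OF _ imp_intro[OF 2] imp_intro[OF 5]], auto simp: tautology_def)
next
  case m_e2 show ?case by simp (rule imp_intro, rule ex_intro)
next
  case m_e3
  let ?P = "CBox cp"
  have "CImp (CAll (CNeg ?P)) (CAll (CNeg (CNeg (CAll (CNeg ?P))))) \<in> MS4_ext Ax"
    by (rule imp_trans[OF all4 all_mono], rule taut_imp, auto simp: tautology_def)
  then show ?case by simp (rule imp_intro, rule contra)
next
  case m_e4
  let ?P = "CBox cp" and ?Q = "CBox cq"
  let ?E = "CNeg (CAll (CNeg ?P))"
  show ?case by simp (rule imp_intro, rule t2[OF _ all5[of "CNeg ?P"] allex[of ?E ?Q]], auto simp: tautology_def)
next
  case m_c1 show ?case by simp (rule imp_intro, rule ex_stable[OF boxall_stable])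
next
  case m_c2
  let ?P = "CBox cp"
  have "CImp (CNeg (CAll (CNeg ?P))) (CBox (CNeg (CAll (CNeg ?P)))) \<in> MS4_ext Ax"
    using stab[of "IEx ip" Ax] by simp
  then show ?case by simp (rule imp_intro, rule imp_trans, assumption, rule box_mono[OF all5[of "CNeg ?P"]])
next
  case (m_mp a b) then show ?case by (simp add: imp_elim)
next
  case (m_subst a s)
  have "csubst (\<lambda>n. goedel (s n)) (goedel a) \<in> MS4_ext Ax" using m_subst.IH by (rule s_subst)
  then show ?case using subst_eq[of s a Ax] s_mp by blast
next
  case (m_nec a) then show ?case by (simp add: s_boxnec s_allnec)
qed


lemma closure: assumes "X \<subseteq> MS4_ext Y" shows "MS4_ext X \<subseteq> MS4_ext Y"
proof
  fix a assume "a \<in> MS4_ext X" then show "a \<in> MS4_ext Y"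
    by induction (blast intro: MS4_ext.intros assms[THEN subsetD])+
qed

abbreviation "kurax \<equiv> IImp (IAll (INeg (INeg ip))) (INeg (INeg (IAll ip)))"
abbreviation "AxA \<equiv> CImp (CBox (CAll (CNeg (CBox (CNeg (CBox cp)))))) (CNeg (CBox (CNeg (CBox (CAll cp)))))"
abbreviation "AxB \<equiv> CImp (CBox (CNeg (CBox (CAll (CNeg cp))))) (CNeg (CBox (CAll (CNeg (CBox (CNeg (CBox (CNeg cp))))))))"

abbreviation NN where "NN X \<equiv> CI X CBot"

lemma boxall_box: "CImp (CBox (CAll a)) (CBox (CAll (CBox a))) \<in> MS4_ext Ax"
  by (rule imp_trans[OF box4 box_mono[OF lc]])

lemma kur_in_A: "goedel kurax \<in> MS4_ext {AxA}"
proof -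
  let ?P = "CBox cp"
  have a: "AxA \<in> MS4_ext {AxA}" by (rule s_extra) simp
  have n1: "CImp (CBox (CNeg ?P)) (NN ?P) \<in> MS4_ext {AxA}"
    by (rule box_mono, rule taut_imp, auto simp: tautology_def)
  have k1: "CImp (NN (NN ?P)) (CNeg (CBox (CNeg ?P))) \<in> MS4_ext {AxA}"
    by (rule t2[OF _ boxT[of "COr (CNeg (NN ?P)) CBot"] contra[OF n1]]) (auto simp: tautology_def)
  have k4: "CImp (CBox (CAll (NN (NN ?P)))) (CNeg (CBox (CNeg (CBox (CAll cp))))) \<in> MS4_ext {AxA}"
    by (rule imp_trans[OF box_mono[OF all_mono[OF k1]]]) (use a in simp)
  have k5: "CImp (CBox (CAll (NN (NN ?P)))) (CBox (CNeg (CBox (CNeg (CBox (CAll cp)))))) \<in> MS4_ext {AxA}"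
    by (rule imp_trans[OF box4 box_mono[OF k4]])
  have m2: "CImp (COr (CNeg (CBox (CAll ?P))) CBot) (CNeg (CBox (CAll cp))) \<in> MS4_ext {AxA}"
    by (rule t1[OF _ boxall_box[of cp]]) (auto simp: tautology_def)
  have m5: "CImp (CNeg (CBox (CNeg (CBox (CAll cp))))) (COr (CNeg (NN (CBox (CAll ?P)))) CBot) \<in> MS4_ext {AxA}"
    by (rule t1[OF _ contra[OF box_mono[OF m2]]]) (auto simp: tautology_def)
  show ?thesis by simp (rule imp_intro, rule imp_trans[OF k5 box_mono[OF m5]])
qed

lemma A_in_GKur: "AxA \<in> GKur"
proof -
  let ?P = "CBox cp" and ?L = "MS4_ext (goedel ` Kur)"
  have "kurax \<in> Kur" unfolding Kur_def by (rule m_extra) simp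
  then have "goedel kurax \<in> ?L" by (rule s_extra[OF imageI])
  then have g1: "CImp (CBox (CAll (NN (NN ?P)))) (NN (NN (CBox (CAll ?P)))) \<in> ?L"
    by simp (rule ci_imp)
  have g2: "CImp (CBox (CAll (CNeg (CBox (CNeg ?P))))) (CBox (CAll (CBox (CNeg (CBox (CNeg ?P)))))) \<in> ?L"
    by (rule boxall_box)
  have n1: "CImp (NN ?P) (CBox (CNeg ?P)) \<in> ?L"
    by (rule box_mono, rule taut_imp, auto simp: tautology_def)
  have g3: "CImp (CBox (CNeg (CBox (CNeg ?P)))) (NN (NN ?P)) \<in> ?L"
    by (rule box_mono, rule t1[OF _ contra[OF n1]]) (auto simp: tautology_def)
  have g4: "CImp (CBox (CAll (CBox (CNeg (CBox (CNeg ?P)))))) (CBox (CAll (NN (NN ?P)))) \<in> ?L"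
    by (rule box_mono[OF all_mono[OF g3]])
  have m1: "CImp (CBox (CAll ?P)) (CBox (CAll cp)) \<in> ?L"
    by (rule box_mono[OF all_mono[OF boxT]])
  have m3: "CImp (CBox (CNeg (CBox (CAll cp)))) (NN (CBox (CAll ?P))) \<in> ?L"
    by (rule box_mono, rule t1[OF _ m1]) (auto simp: tautology_def)
  have g5: "CImp (NN (NN (CBox (CAll ?P)))) (CNeg (CBox (CNeg (CBox (CAll cp))))) \<in> ?L"
    by (rule t2[OF _ boxT[of "COr (CNeg (NN (CBox (CAll ?P)))) CBot"] contra[OF m3]]) (auto simp: tautology_def)
  show ?thesis unfolding GKur_def
    by (rule imp_trans[OF g2 imp_trans[OF g4 imp_trans[OF g1 g5]]])
qed

lemma GKur_A: "GKur = MS4_ext {AxA}"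
proof
  have "goedel ` Kur \<subseteq> MS4_ext {AxA}"
  proof
    fix x assume "x \<in> goedel ` Kur"
    then obtain a where "a \<in> Kur" "x = goedel a" by auto
    then show "x \<in> MS4_ext {AxA}"
      using mipc_sound[of a "{kurax}" "{AxA}"] kur_in_A unfolding Kur_def by auto
  qed
  then show "GKur \<subseteq> MS4_ext {AxA}" unfolding GKur_def by (rule closure)
  show "MS4_ext {AxA} \<subseteq> GKur" unfolding GKur_def
    using A_in_GKur unfolding GKur_def by (intro closure) auto
qed

lemma A_in_B: "AxA \<in> MS4_ext {AxB}"
proof -
  let ?L = "MS4_ext {AxB}"
  have b: "CImp (CBox (CNeg (CBox (CAll (CNeg (CNeg cp))))))
      (CNeg (CBox (CAll (CNeg (CBox (CNeg (CBox (CNeg (CNeg cp))))))))) \<in> ?L"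
    using s_subst[OF s_extra[of AxB "{AxB}"], of "\<lambda>n. CNeg cp"] by simp
  have q1: "CImp (CBox cp) (CBox (CNeg (CNeg cp))) \<in> ?L"
    by (rule box_mono, rule taut_imp, auto simp: tautology_def)
  have h1: "CImp (CNeg (CBox (CNeg (CBox cp)))) (CNeg (CBox (CNeg (CBox (CNeg (CNeg cp)))))) \<in> ?L"
    by (rule contra, rule box_mono, rule contra, rule q1)
  have h2: "CImp (CBox (CAll (CNeg (CBox (CNeg (CBox cp)))))) (CBox (CAll (CNeg (CBox (CNeg (CBox (CNeg (CNeg cp)))))))) \<in> ?L"
    by (rule box_mono[OF all_mono[OF h1]])
  have q2: "CImp (CBox (CAll (CNeg (CNeg cp)))) (CBox (CAll cp)) \<in> ?L"
    by (rule box_mono, rule all_mono, rule taut_imp, auto simp: tautology_def)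
  have h3: "CImp (CBox (CNeg (CBox (CAll cp)))) (CBox (CNeg (CBox (CAll (CNeg (CNeg cp)))))) \<in> ?L"
    by (rule box_mono[OF contra[OF q2]])
  show ?thesis by (rule t3[OF _ h2 h3 b], auto simp: tautology_def)
qed

lemma B_in_A: "AxB \<in> MS4_ext {AxA}"
proof -
  have a: "csubst (\<lambda>n. CNeg cp) AxA \<in> MS4_ext {AxA}" by (rule s_subst, rule s_extra) simp
  show ?thesis using a by simp (rule t1, auto simp: tautology_def)
qed

theorem proposition3p18:
  shows "GKur = MS4_ext {CImp (CBox (CAll (CDia (CBox cp)))) (CDia (CBox (CAll cp)))}
       \<and> GKur = MS4_ext {CImp (CBox (CNeg (CBox (CAll (CNeg cp)))))
                              (CNeg (CBox (CAll (CNeg (CBox (CDia cp))))))}"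
  unfolding CDia_def
proof
  show "GKur = MS4_ext {AxA}" by (rule GKur_A)
  have "MS4_ext {AxA} = MS4_ext {AxB}"
    using closure[of "{AxA}" "{AxB}"] closure[of "{AxB}" "{AxA}"] A_in_B B_in_A by auto
  then show "GKur = MS4_ext {AxB}" using GKur_A by simp
qed

end
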